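(* Let $C>0$ and let $n\ge N\ge1$ be integers. Let $\mathcal{C}^+_{n,C}=\{f\in\mathbb{R}^n: -C\le f[1]\le\dots\le f[n]\le C\}$. For $j=0,\dots,N-1$ define $h_j^+\in\mathbb{R}^n$ by $h_j^+[i]=0$ if $i\le\lfloor jn/N\rfloor$ and $h_j^+[i]=1$ otherwise, and let $H_+=\mathrm{span}(h_0^+,\dots,h_{N-1}^+)$. Set $\delta=2\sqrt2\,C/\sqrt N$. Then for every $f\in\mathcal{C}^+_{n,C}$, $$\inf_{h\in H_+}\|f-h\|_n\le\delta,$$ where $\|v\|_n^2=\frac1n\sum_{i=1}^nv[i]^2$. *)

theory Defs
  imports "HOL-Analysis.Analysis" "HOL-Library.Function_Algebras"
begin

text \<open>Vectors in R^n are represented as functions nat => real, indices 1..n used.\<close>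

definition fscale :: "real \<Rightarrow> (nat \<Rightarrow> real) \<Rightarrow> (nat \<Rightarrow> real)" where
  "fscale c f = (\<lambda>i. c * f i)"

definition fspan :: "(nat \<Rightarrow> real) set \<Rightarrow> (nat \<Rightarrow> real) set" where
  "fspan S = module.span fscale S"

definition normn :: "nat \<Rightarrow> (nat \<Rightarrow> real) \<Rightarrow> real" where
  "normn n v = sqrt ((1 / real n) * (\<Sum>i=1..n. (v i)^2))"

definition monotone_cone :: "nat \<Rightarrow> real \<Rightarrow> (nat \<Rightarrow> real) set" where
  "monotone_cone n C = {f. (\<forall>i\<in>{1..n}. - C \<le> f i \<and> f i \<le> C) \<and>
                           (\<forall>i j. 1 \<le> i \<longrightarrow> i \<le> j \<longrightarrow> j \<le> n \<longrightarrow> f i \<le> f j)}"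

definition hplus :: "nat \<Rightarrow> nat \<Rightarrow> nat \<Rightarrow> (nat \<Rightarrow> real)" where
  "hplus n N j = (\<lambda>i. if i \<le> (j * n) div N then 0 else 1)"

lemma module_fscale: "module fscale"
  by unfold_locales (auto simp: fscale_def algebra_simps fun_eq_iff)

end

theory Submission
  imports Defs
begin

lemma fun_sum_apply: "(sum g A) x = sum (\<lambda>a. (g a :: 'b \<Rightarrow> 'c::comm_monoid_add) x) A"
  by (induction A rule: infinite_finite_induct) auto

lemma sum_blocks:
  fixes b :: "nat \<Rightarrow> nat" and g :: "nat \<Rightarrow> real"
  assumes "mono b"
  shows "(\<Sum>i\<in>{b 0<..b K}. g i) = (\<Sum>j<K. \<Sum>i\<in>{b j<..b (Suc j)}. g i)"
proof (induction K)
  case 0 then show ?case by simp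
next
  case (Suc K)
  have le1: "b 0 \<le> b K" "b K \<le> b (Suc K)" using assms by (auto simp: mono_def)
  have "{b 0<..b (Suc K)} = {b 0<..b K} \<union> {b K<..b (Suc K)}" using le1 by auto
  moreover have "{b 0<..b K} \<inter> {b K<..b (Suc K)} = {}" by auto
  ultimately have "(\<Sum>i\<in>{b 0<..b (Suc K)}. g i) = (\<Sum>i\<in>{b 0<..b K}. g i) + (\<Sum>i\<in>{b K<..b (Suc K)}. g i)"
    by (simp add: sum.union_disjoint)
  then show ?case using Suc by simp
qed

lemma telescope_c:
  fixes v :: "nat \<Rightarrow> real"
  shows "(\<Sum>k\<le>j. v k - (if k = 0 then 0 else v (k - 1))) = v j"
  by (induction j) auto

lemma sq_sum_le:
  fixes D :: "nat \<Rightarrow> real"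
  assumes "\<And>j. j \<in> A \<Longrightarrow> D j \<ge> 0" "finite A"
  shows "(\<Sum>j\<in>A. (D j)^2) \<le> (\<Sum>j\<in>A. D j)^2"
proof -
  let ?S = "\<Sum>j\<in>A. D j"
  have "(\<Sum>j\<in>A. (D j)^2) \<le> (\<Sum>j\<in>A. D j * ?S)"
  proof (rule sum_mono)
    fix j assume j: "j \<in> A"
    have "D j \<le> ?S" using member_le_sum[OF j] assms by auto
    then show "(D j)^2 \<le> D j * ?S" using assms(1)[OF j]
      by (simp add: power2_eq_square mult_left_mono)
  qed
  also have "\<dots> = ?S^2" by (simp add: sum_distrib_right power2_eq_square)
  finally show ?thesis .
qed

theorem lemma5:
  fixes C :: real and n N :: nat and f :: "nat \<Rightarrow> real"
  assumes "C > 0" and "1 \<le> N" and "N \<le> n"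
    and "f \<in> monotone_cone n C"
  shows "(INF h \<in> fspan (hplus n N ` {0..<N}). normn n (f - h))
           \<le> 2 * sqrt 2 * C / sqrt (real N)"
proof -
  interpret M: module fscale by (rule module_fscale)
  have fb: "\<And>i. 1 \<le> i \<Longrightarrow> i \<le> n \<Longrightarrow> - C \<le> f i \<and> f i \<le> C"
    using assms(4) by (auto simp: monotone_cone_def)
  have fm: "\<And>i j. 1 \<le> i \<Longrightarrow> i \<le> j \<Longrightarrow> j \<le> n \<Longrightarrow> f i \<le> f j"
    using assms(4) by (auto simp: monotone_cone_def)
  define b where "b j = j * n div N" for j
  have bSuc: "b j < b (Suc j)" for j
  proof -
    have "(j * n + N) div N \<le> (j * n + n) div N" using assms(3) by (intro div_le_mono) simp
    moreover have "(j * n + N) div N = j * n div N + 1" using assms(2) by simp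
    ultimately show ?thesis by (simp add: b_def add.commute)
  qed
  have smb: "strict_mono b" using bSuc by (simp add: strict_mono_Suc_iff)
  hence monob: "mono b" by (simp add: strict_mono_mono)
  have b0: "b 0 = 0" by (simp add: b_def)
  have bN: "b N = n" using assms(2) by (simp add: b_def)
  have bn: "j \<le> N \<Longrightarrow> b j \<le> n" for j using monob bN by (metis monoD)
  have card_bound: "real (b (Suc j) - b j) * real N \<le> 2 * real n" for j
  proof -
    have e1: "N * b (Suc j) \<le> Suc j * n" unfolding b_def by (simp add: mult.commute times_div_less_eq_dividend)
    have e2: "j * n < N * (b j + 1)"
    proof -
      have "j * n = N * b j + j * n mod N" unfolding b_def by simp
      moreover have "j * n mod N < N" using assms(2) by simp
      ultimately show ?thesis by (simp add: algebra_simps)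
    qed
    have "(b (Suc j) - b j) * N \<le> 2 * n" using e1 e2 assms(3) bSuc[of j]
      by (simp add: algebra_simps diff_mult_distrib)
    then show ?thesis by (metis of_nat_le_iff of_nat_mult of_nat_numeral)
  qed
  define v where "v j = f (b (Suc j))" for j
  define c where "c k = v k - (if k = 0 then 0 else v (k - 1))" for k
  define h where "h = (\<Sum>j<N. fscale (c j) (hplus n N j))"
  have hspan: "h \<in> fspan (hplus n N ` {0..<N})"
    unfolding h_def fspan_def
    by (intro M.span_sum M.span_scale M.span_base) auto
  have hval: "h i = v j" if j: "j < N" and i: "b j < i" "i \<le> b (Suc j)" for i j
  proof -
    have eq: "\<And>k. k < N \<Longrightarrow> (\<not> i \<le> b k) = (k \<le> j)"
    proof -
      fix k assume "k < N"
      show "(\<not> i \<le> b k) = (k \<le> j)"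
      proof
        assume "\<not> i \<le> b k" 
        show "k \<le> j"
        proof (rule ccontr)
          assume "\<not> k \<le> j" then have "Suc j \<le> k" by simp
          then have "b (Suc j) \<le> b k" using monob by (simp add: monoD)
          then show False using \<open>\<not> i \<le> b k\<close> i by simp
        qed
      next
        assume "k \<le> j" then have "b k \<le> b j" using monob by (simp add: monoD)
        then show "\<not> i \<le> b k" using i by simp
      qed
    qed
    have "h i = (\<Sum>k<N. c k * (if i \<le> b k then 0 else 1))"
      unfolding h_def fun_sum_apply by (simp add: fscale_def hplus_def b_def)
    also have "\<dots> = (\<Sum>k\<in>{k. k < N \<and> k \<le> j}. c k)"
      by (rule sum.mono_neutral_cong_right) (auto, (metis eq)+)
    also have "{k. k < N \<and> k \<le> j} = {..j}" using j by auto
    also have "(\<Sum>k\<in>{..j}. c k) = v j" unfolding c_def by (rule telescope_c)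
    finally show ?thesis .
  qed
  define D where "D j = f (b (Suc j)) - f (b j + 1)" for j
  have D0: "j < N \<Longrightarrow> 0 \<le> D j" for j
    unfolding D_def using fm[of "b j + 1" "b (Suc j)"] bSuc[of j] bn[of "Suc j"] by simp
  have blk: "(\<Sum>i\<in>{b j<..b (Suc j)}. (f i - h i)^2) \<le> real (b (Suc j) - b j) * (D j)^2"
    if j: "j < N" for j
  proof -
    have "(\<Sum>i\<in>{b j<..b (Suc j)}. (f i - h i)^2) \<le> (\<Sum>i\<in>{b j<..b (Suc j)}. (D j)^2)"
    proof (rule sum_mono)
      fix i assume i: "i \<in> {b j<..b (Suc j)}"
      have hi: "h i = f (b (Suc j))" using hval[OF j] i by (auto simp: v_def)
      have sn: "b (Suc j) \<le> n" using bn[of "Suc j"] j by simp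
      have a1: "f i \<le> f (b (Suc j))" using fm[of i "b (Suc j)"] i sn by auto
      have a2: "f (b j + 1) \<le> f i" using fm[of "b j + 1" i] i sn by auto
      have "\<bar>f i - h i\<bar> \<le> D j" using a1 a2 hi by (simp add: D_def)
      then show "(f i - h i)^2 \<le> (D j)^2"
        by (metis abs_ge_zero power2_abs power_mono)
    qed
    also have "\<dots> = real (b (Suc j) - b j) * (D j)^2" by simp
    finally show ?thesis .
  qed
  define g where "g j = f (max 1 (b j))" for j
  have Dg: "D j \<le> g (Suc j) - g j" if j: "j < N" for j
  proof -
    have sn: "b (Suc j) \<le> n" using bn[of "Suc j"] j by simp
    have "max 1 (b (Suc j)) = b (Suc j)" using bSuc[of j] by simp
    moreover have "f (max 1 (b j)) \<le> f (b j + 1)"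
      using fm[of "max 1 (b j)" "b j + 1"] bSuc[of j] sn by auto
    ultimately show ?thesis by (simp add: D_def g_def)
  qed
  have sumD: "(\<Sum>j<N. D j) \<le> 2 * C"
  proof -
    have "(\<Sum>j<N. D j) \<le> (\<Sum>j<N. g (Suc j) - g j)" by (rule sum_mono) (simp add: Dg)
    also have "\<dots> = g N - g 0" by (rule sum_lessThan_telescope)
    also have "\<dots> = f n - f 1" using bN b0 assms(2,3) by (simp add: g_def)
    also have "\<dots> \<le> 2 * C" using fb[of n] fb[of 1] assms(2,3) by simp
    finally show ?thesis .
  qed
  have sumD2: "(\<Sum>j<N. (D j)^2) \<le> 4 * C^2"
  proof -
    have "(\<Sum>j<N. (D j)^2) \<le> (\<Sum>j<N. D j)^2" by (rule sq_sum_le) (auto simp: D0)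
    also have "\<dots> \<le> (2 * C)^2"
      using sumD sum_nonneg[of "{..<N}" D] D0 by (intro power_mono) auto
    finally show ?thesis by (simp add: power_mult_distrib)
  qed
  have Npos: "real N > 0" using assms(2) by simp
  have npos: "real n > 0" using assms(2,3) by simp
  have total: "(\<Sum>i=1..n. ((f - h) i)^2) \<le> 2 * real n / real N * (4 * C^2)"
  proof -
    have "{1..n} = {b 0<..b N}" using b0 bN by auto
    then have "(\<Sum>i=1..n. ((f - h) i)^2) = (\<Sum>j<N. \<Sum>i\<in>{b j<..b (Suc j)}. (f i - h i)^2)"
      using sum_blocks[OF monob, of "\<lambda>i. (f i - h i)^2" N] by simp
    also have "\<dots> \<le> (\<Sum>j<N. 2 * real n / real N * (D j)^2)"
    proof (rule sum_mono)
      fix j assume "j \<in> {..<N}"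
      then have j: "j < N" by simp
      have "real (b (Suc j) - b j) \<le> 2 * real n / real N"
        using card_bound[of j] Npos by (simp add: field_simps)
      then have "real (b (Suc j) - b j) * (D j)^2 \<le> 2 * real n / real N * (D j)^2"
        by (rule mult_right_mono) simp
      then show "(\<Sum>i\<in>{b j<..b (Suc j)}. (f i - h i)^2) \<le> 2 * real n / real N * (D j)^2"
        using blk[OF j] by linarith
    qed
    also have "\<dots> = 2 * real n / real N * (\<Sum>j<N. (D j)^2)" by (simp add: sum_distrib_left)
    also have "\<dots> \<le> 2 * real n / real N * (4 * C^2)"
      using sumD2 Npos npos by (intro mult_left_mono) auto
    finally show ?thesis .
  qed
  have "normn n (f - h) \<le> 2 * sqrt 2 * C / sqrt (real N)"
    unfolding normn_def
  proof (rule real_le_lsqrt)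
    show "0 \<le> 2 * sqrt 2 * C / sqrt (real N)" using assms(1) by simp
    have "(2 * sqrt 2 * C / sqrt (real N))^2 = 8 * C^2 / real N"
      using Npos by (simp add: power_divide power_mult_distrib)
    moreover have "1 / real n * (\<Sum>i=1..n. ((f - h) i)^2) \<le> 8 * C^2 / real N"
    proof -
      have "1 / real n * (\<Sum>i=1..n. ((f - h) i)^2) \<le> 1 / real n * (2 * real n / real N * (4 * C^2))"
        using total npos by (intro mult_left_mono) auto
      also have "\<dots> = 8 * C^2 / real N" using npos by (simp add: field_simps)
      finally show ?thesis .
    qed
    ultimately show "1 / real n * (\<Sum>i=1..n. ((f - h) i)^2) \<le> (2 * sqrt 2 * C / sqrt (real N))^2"
      by simp
  qed
  moreover have "(INF h \<in> fspan (hplus n N ` {0..<N}). normn n (f - h)) \<le> normn n (f - h)"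
    by (rule cINF_lower[OF _ hspan]) (auto simp: bdd_below_def normn_def intro!: exI[of _ 0] divide_nonneg_nonneg sum_nonneg)
  ultimately show ?thesis by linarith
qed

end
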